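(* Let $N\ge 1$ and $n\ge 2$ be integers. Let $\phi_0,\phi_1,\phi_2,\dots$ be the orthonormal Hermite polynomials with respect to the weight $M(v)=\frac{1}{\sqrt{2\pi}}e^{-v^2/2}$, i.e. $\int_{\mathbb{R}}\phi_i(v)\phi_j(v)M(v)\,dv=\delta_{ij}$, with $\phi_0=1$, $\phi_1(v)=v$ and $v\phi_k(v)=\sqrt{k}\,\phi_{k-1}(v)+\sqrt{k+1}\,\phi_{k+1}(v)$. Let $0<z_1<\dots<z_N$ be the positive roots of $\phi_{2N}$, and set $v_j=-z_j$, $v_{N+j}=z_j$ for $j=1,\dots,N$. Let $V$ be the $2N\times 2N$ matrix with entries $V_{ij}=\phi_{i}(v_{j+1})$ for $i,j=0,\dots,2N-1$ (so the columns of $V$ correspond to the velocities $v_1,\dots,v_{2N}$ in this order). Let $A$ be the symmetric tridiagonal $2N\times 2N$ matrix with zero diagonal and off-diagonal entries $A_{p-1,p}=A_{p,p-1}=\sqrt{p}$ for $p=1,\dots,2N-1$ (indices from $0$). Define the $N\times 2N$ matrix $B_2=\begin{pmatrix} I_N & (n-1)I_N\end{pmatrix}V^T$. Then $y^TAy\le 0$ for every $y\in\ker(B_2)$. Moreover, if $n\ge 3$, then $y^TAy<0$ for every nonzero $y\in\ker(B_2)$.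
   Context: $I_N$ denotes the $N\times N$ identity matrix. The matrix $B_2$ encodes the boundary condition $B_2U(0,t)=0$ arising from the symmetric coupling condition $f^{(i)}(t,0,v)=\frac{1}{n-1}\sum_{k\ne i}f^{(k)}(t,0,-v)$ ($v>0$) at an $n$-edge network junction, for differences of moment vectors on two edges. *)

theory Defs
  imports Complex_Main "Jordan_Normal_Form.Matrix_Kernel"
begin

text \<open>Orthonormal Hermite polynomials (weight exp(-v^2/2)/sqrt(2 pi)), via the
three-term recurrence  v phi_(k+1) = sqrt(k+1) phi_k + sqrt(k+2) phi_(k+2).\<close>
fun hermite_on :: "nat \<Rightarrow> real \<Rightarrow> real" where
  "hermite_on 0 v = 1"
| "hermite_on (Suc 0) v = v"
| "hermite_on (Suc (Suc k)) v =
     (v * hermite_on (Suc k) v - sqrt (real (Suc k)) * hermite_on k v) / sqrt (real (Suc (Suc k)))"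

definition pos_root :: "nat \<Rightarrow> nat \<Rightarrow> real" where
  "pos_root N j = sorted_list_of_set {x. 0 < x \<and> hermite_on (2*N) x = 0} ! (j - 1)"

definition velocity :: "nat \<Rightarrow> nat \<Rightarrow> real" where
  "velocity N j = (if j \<le> N then - pos_root N j else pos_root N (j - N))"

definition Vmat :: "nat \<Rightarrow> real mat" where
  "Vmat N = mat (2*N) (2*N) (\<lambda>(i,j). hermite_on i (velocity N (j+1)))"

definition Amat :: "nat \<Rightarrow> real mat" where
  "Amat N = mat (2*N) (2*N) (\<lambda>(i,j). if j = i + 1 then sqrt (real j)
                                      else if i = j + 1 then sqrt (real i) else 0)"

definition B2mat :: "nat \<Rightarrow> nat \<Rightarrow> real mat" where
  "B2mat N n = mat N (2*N) (\<lambda>(i,j). if j = i then 1 else if j = i + N then real n - 1 else 0)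
               * transpose_mat (Vmat N)"

end

theory Submission
  imports Defs
begin
abbreviation h where "h \<equiv> hermite_on"

lemma h_three: "x * h i x = (if i = 0 then 0 else sqrt (real i) * h (i - 1) x) + sqrt (real (Suc i)) * h (Suc i) x"
proof (cases i)
  case 0 then show ?thesis by simp
next
  case (Suc k)
  have "sqrt (real (Suc (Suc k))) > 0" by simp
  then show ?thesis using Suc by (simp add: field_simps)
qed

lemma h_parity: "h k (- x) = (-1) ^ k * h k x"
  by (induction k x rule: hermite_on.induct) (auto simp: field_simps)

lemma h_zero_even: "h (2 * m) 0 \<noteq> 0"
proof (induction m)
  case 0 then show ?case by simp
next
  case (Suc m)
  have e: "2 * Suc m = Suc (Suc (2 * m))" by simp
  show ?case unfolding e using Suc by simp
qed


fun hp :: "nat \<Rightarrow> real poly" where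
  "hp 0 = 1"
| "hp (Suc 0) = [:0, 1:]"
| "hp (Suc (Suc k)) = Polynomial.smult (1 / sqrt (real (Suc (Suc k)))) (pCons 0 (hp (Suc k)) + Polynomial.smult (- sqrt (real (Suc k))) (hp k))"

lemma poly_hp: "poly (hp k) x = h k x"
  by (induction k rule: hp.induct) (auto simp: field_simps)

lemma hp_deg: "degree (hp k) = k \<and> lead_coeff (hp k) > 0"
proof (induction k rule: hp.induct)
  case 1 then show ?case by simp
next
  case 2 then show ?case by simp
next
  case (3 k)
  have nz: "hp (Suc k) \<noteq> 0" using 3 by auto
  have d1: "degree (pCons 0 (hp (Suc k))) = Suc (Suc k)" using nz 3 by simp
  have d2: "degree (Polynomial.smult (- sqrt (real (Suc k))) (hp k)) < Suc (Suc k)"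
    using Polynomial.degree_smult_le[of "- sqrt (real (Suc k))" "hp k"] 3 by simp
  have dsum: "degree (pCons 0 (hp (Suc k)) + Polynomial.smult (- sqrt (real (Suc k))) (hp k)) = Suc (Suc k)"
    using degree_add_eq_left[of "Polynomial.smult (- sqrt (real (Suc k))) (hp k)" "pCons 0 (hp (Suc k))"] d1 d2 by simp
  have lsum: "lead_coeff (pCons 0 (hp (Suc k)) + Polynomial.smult (- sqrt (real (Suc k))) (hp k)) = lead_coeff (hp (Suc k))"
    using dsum d1 d2 3 by (simp add: nz coeff_eq_0)
  have pos: "1 / sqrt (real (Suc (Suc k))) > 0" by simp
  have cpos: "coeff (hp (Suc k)) (Suc k) > 0" using 3 by auto
  show ?case using dsum lsum 3 pos cpos by (simp del: hp.simps(2) add: )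
qed

lemma h_cont: "isCont (h k) x"
proof -
  have "h k = poly (hp k)" by (rule ext) (simp add: poly_hp)
  then show ?thesis by simp
qed

lemma poly_factor:
  fixes p :: "real poly"
  assumes "finite S" "card S = degree p" "\<forall>a\<in>S. poly p a = 0"
  shows "poly p x = lead_coeff p * (\<Prod>a\<in>S. x - a)"
  using assms
proof (induction S arbitrary: p rule: finite_induct)
  case empty
  then have "[: coeff p 0 :] = p" using degree_0_id by auto
  then show ?case using empty by (metis card.empty poly_pCons mult_zero_right add.right_neutral prod.empty mult_1_right poly_0)
next
  case (insert a S)
  have "poly p a = 0" using insert by auto
  then obtain q where q: "p = [:- a, 1:] * q" using poly_eq_0_iff_dvd by (metis dvdE)
  have dp: "degree p = Suc (card S)" using insert by simp
  then have pnz: "p \<noteq> 0" by auto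
  then have qnz: "q \<noteq> 0" using q by auto
  have "degree ([:- a, 1:] * q) = degree [:- a, 1:] + degree q"
    by (rule degree_mult_eq) (auto simp: qnz)
  then have "degree p = 1 + degree q" unfolding q by simp
  then have dq: "degree q = card S" using dp by simp
  have rq: "\<forall>b\<in>S. poly q b = 0"
  proof
    fix b assume b: "b \<in> S"
    then have "b \<noteq> a" using insert by auto
    moreover have "poly p b = 0" using insert b by auto
    ultimately show "poly q b = 0" using q by simp
  qed
  have ih: "poly q x = lead_coeff q * (\<Prod>a\<in>S. x - a)" using insert.IH[OF dq[symmetric] rq] .
  have l1: "lead_coeff [:-a, 1:] = (1::real)" by simp
  have lc: "lead_coeff p = lead_coeff q" using q l1 lead_coeff_mult[of "[:-a,1:]" q] by (metis mult_1)
  have "poly p x = (x - a) * poly q x" unfolding q by (simp add: algebra_simps)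
  also have "\<dots> = lead_coeff p * ((x - a) * (\<Prod>a\<in>S. x - a))" using ih lc by simp
  also have "\<dots> = lead_coeff p * (\<Prod>a\<in>insert a S. x - a)" using insert(1,2) by simp
  finally show ?case .
qed

lemma prod_sign:
  fixes S :: "real set"
  assumes "finite S" "x \<notin> S"
  shows "(\<Prod>a\<in>S. x - a) * (-1) ^ card {a\<in>S. x < a} > 0"
  using assms
proof (induction S rule: finite_induct)
  case empty then show ?case by simp
next
  case (insert b S)
  have fin: "finite {a\<in>S. x < a}" using insert by auto
  show ?case
  proof (cases "x < b")
    case True
    then have "{a\<in>insert b S. x < a} = insert b {a\<in>S. x < a}" by auto
    then have c: "card {a\<in>insert b S. x < a} = Suc (card {a\<in>S. x < a})" using fin insert by simp
    have g: "\<And>P (c::nat). (x - b) * P * (-1::real) ^ Suc c = (b - x) * (P * (-1) ^ c)" by (simp add: algebra_simps)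
    have eq: "(\<Prod>a\<in>insert b S. x - a) * (-1) ^ card {a\<in>insert b S. x < a}
        = (b - x) * ((\<Prod>a\<in>S. x - a) * (-1) ^ card {a\<in>S. x < a})"
      unfolding c prod.insert[OF insert(1,2)] g ..
    have pos: "0 < (b - x) * ((\<Prod>a\<in>S. x - a) * (-1) ^ card {a\<in>S. x < a})"
      using mult_pos_pos[OF _ insert.IH] True insert by simp
    show ?thesis by (subst eq) (rule pos)
  next
    case False
    then have "x > b" using insert by (metis insertCI linorder_neqE_linordered_idom)
    then have "{a\<in>insert b S. x < a} = {a\<in>S. x < a}" by auto
    then have eq: "(\<Prod>a\<in>insert b S. x - a) * (-1) ^ card {a\<in>insert b S. x < a}
        = (x - b) * ((\<Prod>a\<in>S. x - a) * (-1) ^ card {a\<in>S. x < a})"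
      unfolding prod.insert[OF insert(1,2)] by (simp only: mult.assoc)
    have pos: "0 < (x - b) * ((\<Prod>a\<in>S. x - a) * (-1) ^ card {a\<in>S. x < a})"
      using mult_pos_pos[OF _ insert.IH] \<open>x > b\<close> insert by simp
    show ?thesis by (subst eq) (rule pos)
  qed
qed

lemma root_between:
  fixes f :: "real \<Rightarrow> real"
  assumes "a < b" "f a * f b < 0" "\<And>x. isCont f x"
  shows "\<exists>y. a < y \<and> y < b \<and> f y = 0"
proof -
  have "\<exists>y. a \<le> y \<and> y \<le> b \<and> f y = 0"
  proof (cases "f a < 0")
    case True
    have "f b > 0"
    proof (rule ccontr)
      assume "\<not> f b > 0"
      then have "f a * f b \<ge> 0" using True by (intro mult_nonpos_nonpos) auto
      then show False using assms(2) by simp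
    qed
    then show ?thesis using IVT[of f a 0 b] True assms by auto
  next
    case False
    then have "f a > 0" "f b < 0" using assms(2) by (auto simp: mult_less_0_iff)
    then show ?thesis using IVT2[of f b 0 a] assms by auto
  qed
  then obtain y where y: "a \<le> y" "y \<le> b" "f y = 0" by blast
  then have "y \<noteq> a" "y \<noteq> b" using assms(2) by auto
  then show ?thesis using y by (intro exI[of _ y]) auto
qed

lemma sign_prod_neg:
  fixes a b :: real
  assumes "a * (-1) ^ Suc e > 0" "b * (-1) ^ e > 0"
  shows "a * b < 0"
proof (cases "even e")
  case True then show ?thesis using assms by (simp add: mult_neg_pos)
next
  case False then show ?thesis using assms by (simp add: mult_pos_neg)
qed

lemma neg1_sq: "(-1::real) ^ n * (-1) ^ n = 1"
  by (induct n) auto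

lemma interlace:
  "\<exists>r. (\<forall>i j. i < j \<longrightarrow> j < Suc m \<longrightarrow> r i < r j) \<and> (\<forall>i<Suc m. h (Suc m) (r i) = 0)
        \<and> (\<forall>i<Suc m. h m (r i) * (-1) ^ (m - i) > 0)"
proof (induction m)
  case 0
  show ?case by (rule exI[of _ "\<lambda>_. 0"]) auto
next
  case (Suc m)
  define k where "k = Suc m"
  obtain r where mono: "\<forall>i j. i < j \<longrightarrow> j < k \<longrightarrow> r i < r j"
    and roots: "\<forall>i<k. h k (r i) = 0" and sg: "\<forall>i<k. h m (r i) * (-1) ^ (m - i) > 0"
    using Suc.IH unfolding k_def by blast
  have kpos: "0 < k" unfolding k_def by simp
  define S where "S = r ` {..<k}"
  have inj: "inj_on r {..<k}"
  proof (rule inj_onI)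
    fix i j assume "i \<in> {..<k}" "j \<in> {..<k}" "r i = r j"
    then show "i = j" using mono by (metis lessThan_iff less_irrefl nat_neq_iff)
  qed
  have finS: "finite S" unfolding S_def by simp
  have cardS: "card S = k" unfolding S_def using card_image[OF inj] by simp
  have degk: "degree (hp k) = k" "lead_coeff (hp k) > 0" using hp_deg[of k] by blast+
  have rootsS: "\<forall>a\<in>S. poly (hp k) a = 0" unfolding S_def using roots by (auto simp: poly_hp)
  have fact1: "h k x * (-1) ^ card {a\<in>S. x < a} > 0" if "x \<notin> S" for x
  proof -
    have "h k x = lead_coeff (hp k) * (\<Prod>a\<in>S. x - a)"
      using poly_factor[OF finS _ rootsS, of x] cardS degk by (simp add: poly_hp)
    then have "h k x * (-1) ^ card {a\<in>S. x < a} = lead_coeff (hp k) * ((\<Prod>a\<in>S. x - a) * (-1) ^ card {a\<in>S. x < a})"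
      by simp
    also have "\<dots> > 0" using prod_sign[OF finS that] degk by simp
    finally show ?thesis .
  qed
  have fact2: "h (Suc k) (r i) * (-1) ^ (k - i) > 0" if "i < k" for i
  proof -
    have e1: "h (Suc k) (r i) = - (sqrt (real (Suc m)) / sqrt (real (Suc (Suc m)))) * h m (r i)"
      using roots that unfolding k_def by (simp add: field_simps)
    have e2: "(-1::real) ^ (k - i) = - ((-1) ^ (m - i))"
      using that unfolding k_def by (simp add: Suc_diff_le)
    have "h (Suc k) (r i) * (-1) ^ (k - i) = (sqrt (real (Suc m)) / sqrt (real (Suc (Suc m)))) * (h m (r i) * (-1) ^ (m - i))"
      unfolding e1 e2 by simp
    also have "\<dots> > 0" using sg that by simp
    finally show ?thesis .
  qed
  obtain M0 where M0: "\<forall>x\<ge>M0. poly (hp (Suc k)) x \<ge> lead_coeff (hp (Suc k))"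
    using poly_pinfty_gt_lc[of "hp (Suc k)"] hp_deg by blast
  define M where "M = max M0 (1 + (\<Sum>i<k. \<bar>r i\<bar>))"
  have Mbig: "\<bar>r i\<bar> < M" if "i < k" for i
  proof -
    have "\<bar>r i\<bar> \<le> (\<Sum>i<k. \<bar>r i\<bar>)" using that by (intro member_le_sum) auto
    then show ?thesis unfolding M_def by simp
  qed
  have hM: "h (Suc k) M > 0"
  proof -
    have "M \<ge> M0" unfolding M_def by simp
    then have "h (Suc k) M \<ge> lead_coeff (hp (Suc k))" using M0 by (simp add: poly_hp)
    moreover have "lead_coeff (hp (Suc k)) > 0" using hp_deg[of "Suc k"] by blast
    ultimately show ?thesis by linarith
  qed
  have hmM: "h (Suc k) (-M) * (-1) ^ (Suc k) > 0"
  proof -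
    have "h (Suc k) (-M) * (-1) ^ (Suc k) = ((-1) ^ Suc k * (-1) ^ Suc k) * h (Suc k) M"
      by (simp only: h_parity mult_ac)
    then show ?thesis using hM neg1_sq[of "Suc k"] by simp
  qed
  define lo where "lo j = (if j = 0 then -M else r (j - 1))" for j
  define hi where "hi j = (if j = k then M else r j)" for j
  have sl: "h (Suc k) (lo j) * (-1) ^ (Suc (k - j)) > 0" if "j \<le> k" for j
  proof (cases "j = 0")
    case True then show ?thesis using hmM unfolding lo_def by simp
  next
    case False
    then have "k - (j - 1) = Suc (k - j)" using that by simp
    then show ?thesis using fact2[of "j - 1"] False that unfolding lo_def by simp
  qed
  have sh: "h (Suc k) (hi j) * (-1) ^ (k - j) > 0" if "j \<le> k" for j
  proof (cases "j = k")
    case True then show ?thesis using hM unfolding hi_def by simp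
  next
    case False
    then show ?thesis using fact2[of j] that unfolding hi_def by simp
  qed
  have lh: "lo j < hi j" if jk0: "j \<le> k" for j
  proof -
    consider "j = 0" | "j = k" | "0 < j" "j < k" using jk0 by linarith
    then show ?thesis
    proof cases
      case 1 then show ?thesis using Mbig[of 0] kpos unfolding lo_def hi_def by auto
    next
      case 2 then show ?thesis using Mbig[of "k - 1"] kpos unfolding lo_def hi_def by auto
    next
      case 3 then show ?thesis using mono unfolding lo_def hi_def by auto
    qed
  qed
  have ex: "\<forall>j. \<exists>y. j \<le> k \<longrightarrow> lo j < y \<and> y < hi j \<and> h (Suc k) y = 0"
  proof
    fix j
    show "\<exists>y. j \<le> k \<longrightarrow> lo j < y \<and> y < hi j \<and> h (Suc k) y = 0"
    proof (cases "j \<le> k")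
      case True
      have "h (Suc k) (lo j) * h (Suc k) (hi j) < 0"
        using sign_prod_neg[OF sl[OF True] sh[OF True]] .
      then show ?thesis using root_between[OF lh[OF True], of "h (Suc k)"] h_cont by blast
    qed auto
  qed
  then obtain y where y: "\<And>j. j \<le> k \<Longrightarrow> lo j < y j \<and> y j < hi j \<and> h (Suc k) (y j) = 0"
    by metis
  have hl: "hi i \<le> lo j" if "i < j" "j \<le> k" for i j
  proof -
    have "hi i = r i" "lo j = r (j - 1)" using that unfolding hi_def lo_def by auto
    moreover have "r i \<le> r (j - 1)"
      using mono that by (cases "i = j - 1") (auto simp: less_imp_le)
    ultimately show ?thesis by simp
  qed
  have key1: "y j < r i" if "j \<le> i" "i < k" for i j
  proof -
    have "y j < hi j" using y[of j] that by auto
    moreover have "hi j = r j" using that unfolding hi_def by auto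
    moreover have "r j \<le> r i" using mono that by (cases "j = i") (auto simp: less_imp_le)
    ultimately show ?thesis by simp
  qed
  have key2: "r i < y j" if "i < j" "j \<le> k" for i j
  proof -
    have "lo j < y j" using y[of j] that by auto
    moreover have "hi i = r i" using that unfolding hi_def by auto
    ultimately show ?thesis using hl[OF that] by simp
  qed
  show ?case
  proof (intro exI[of _ y] conjI allI impI)
    fix i j assume "i < j" "j < Suc (Suc m)"
    then show "y i < y j" using y[of i] y[of j] hl[of i j] unfolding k_def by force
  next
    fix i assume "i < Suc (Suc m)"
    then show "h (Suc (Suc m)) (y i) = 0" using y[of i] unfolding k_def by auto
  next
    fix j assume j: "j < Suc (Suc m)"
    then have jk: "j \<le> k" unfolding k_def by simp
    have nS: "y j \<notin> S"
    proof
      assume "y j \<in> S"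
      then obtain i where i: "i < k" "y j = r i" unfolding S_def by auto
      show False
      proof (cases "j \<le> i")
        case True then show False using key1[OF True i(1)] i by simp
      next
        case False then show False using key2[of i j] jk i by simp
      qed
    qed
    have set: "{a\<in>S. y j < a} = r ` {j..<k}"
    proof
      show "{a\<in>S. y j < a} \<subseteq> r ` {j..<k}"
      proof
        fix a assume "a \<in> {a\<in>S. y j < a}"
        then obtain i where i: "i < k" "a = r i" "y j < r i" unfolding S_def by auto
        then have "j \<le> i" using key2[of i j] jk by (metis not_le less_asym)
        then show "a \<in> r ` {j..<k}" using i by auto
      qed
    next
      show "r ` {j..<k} \<subseteq> {a\<in>S. y j < a}" unfolding S_def using key1 by auto
    qed
    have card: "card {a\<in>S. y j < a} = k - j"
      unfolding set by (subst card_image) (auto intro: inj_on_subset[OF inj])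
    show "0 < h (Suc m) (y j) * (-1) ^ (Suc m - j)"
      using fact1[OF nS] unfolding card k_def .
  qed
qed

lemma pos_roots_card:
  assumes N: "N \<ge> 1"
  shows "finite {x. 0 < x \<and> h (2*N) x = 0}" "N \<le> card {x. 0 < x \<and> h (2*N) x = 0}"
proof -
  define Z where "Z = {x. 0 < x \<and> h (2*N) x = 0}"
  have "degree (hp (2*N)) = 2*N" using hp_deg by blast
  then have "hp (2*N) \<noteq> 0" using N by auto
  then have "finite {x. poly (hp (2*N)) x = 0}" by (rule poly_roots_finite)
  moreover have "Z \<subseteq> {x. poly (hp (2*N)) x = 0}" unfolding Z_def by (auto simp: poly_hp)
  ultimately have finZ: "finite Z" by (rule finite_subset[rotated])
  then show "finite {x. 0 < x \<and> h (2*N) x = 0}" unfolding Z_def .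
  have e: "Suc (2*N - 1) = 2*N" using N by simp
  obtain r where mono: "\<forall>i j. i < j \<longrightarrow> j < 2*N \<longrightarrow> r i < r j" and roots: "\<forall>i<2*N. h (2*N) (r i) = 0"
    using interlace[of "2*N - 1"] unfolding e by blast
  have inj: "inj_on r {..<2*N}"
  proof (rule inj_onI)
    fix i j assume "i \<in> {..<2*N}" "j \<in> {..<2*N}" "r i = r j"
    then show "i = j" using mono by (metis lessThan_iff less_irrefl nat_neq_iff)
  qed
  have sub: "r ` {..<2*N} \<subseteq> Z \<union> uminus ` Z"
  proof
    fix x assume "x \<in> r ` {..<2*N}"
    then have x: "h (2*N) x = 0" using roots by auto
    then have "x \<noteq> 0" using h_zero_even[of N] by auto
    show "x \<in> Z \<union> uminus ` Z"
    proof (cases "x > 0")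
      case True then show ?thesis using x unfolding Z_def by auto
    next
      case False
      have "h (2*N) (-x) = 0" using x by (simp add: h_parity)
      then have "-x \<in> Z" using False \<open>x \<noteq> 0\<close> unfolding Z_def by auto
      then have "- (-x) \<in> uminus ` Z" by blast
      then show ?thesis by simp
    qed
  qed
  have "2*N = card (r ` {..<2*N})" using card_image[OF inj] by simp
  also have "\<dots> \<le> card (Z \<union> uminus ` Z)" using sub finZ by (intro card_mono) auto
  also have "\<dots> \<le> card Z + card (uminus ` Z)" by (rule card_Un_le)
  also have "\<dots> \<le> card Z + card Z" using card_image_le[OF finZ, of uminus] by simp
  finally show "N \<le> card {x. 0 < x \<and> h (2*N) x = 0}" unfolding Z_def by simp
qed

lemma vel_props:
  assumes N: "N \<ge> 1"
  shows "\<And>j. j < 2*N \<Longrightarrow> h (2*N) (velocity N (j+1)) = 0"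
    and "\<And>j l. j < 2*N \<Longrightarrow> l < 2*N \<Longrightarrow> j \<noteq> l \<Longrightarrow> velocity N (j+1) \<noteq> velocity N (l+1)"
    and "\<And>j. j < N \<Longrightarrow> velocity N (j+1) = - velocity N (j+N+1) \<and> velocity N (j+N+1) > 0"
proof -
  define Z where "Z = {x. 0 < x \<and> h (2*N) x = 0}"
  define zs where "zs = sorted_list_of_set Z"
  have finZ: "finite Z" and cZ: "N \<le> card Z" using pos_roots_card[OF N] unfolding Z_def by auto
  have len: "N \<le> length zs" unfolding zs_def using cZ by simp
  have setz: "set zs = Z" unfolding zs_def using finZ by simp
  have dz: "distinct zs" unfolding zs_def by simp
  have zZ: "zs ! j \<in> Z" if "j < N" for j using that len setz by (metis nth_mem order_less_le_trans)
  have zinj: "zs ! j \<noteq> zs ! l" if "j < N" "l < N" "j \<noteq> l" for j l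
    using that len dz by (simp add: nth_eq_iff_index_eq)
  have v1: "velocity N (j+1) = - zs ! j" if "j < N" for j
    using that unfolding velocity_def pos_root_def zs_def Z_def by simp
  have v2: "velocity N (j+1) = zs ! (j - N)" if "N \<le> j" for j
    using that unfolding velocity_def pos_root_def zs_def Z_def by (simp add: Suc_diff_le)
  show "h (2*N) (velocity N (j+1)) = 0" if "j < 2*N" for j
  proof (cases "j < N")
    case True then show ?thesis using v1 zZ[of j] unfolding Z_def by (simp add: h_parity)
  next
    case False then show ?thesis using v2[of j] zZ[of "j - N"] that unfolding Z_def by auto
  qed
  show "velocity N (j+1) \<noteq> velocity N (l+1)" if "j < 2*N" "l < 2*N" "j \<noteq> l" for j l
  proof -
    have pos: "zs ! i > 0" if "i < N" for i using zZ[OF that] unfolding Z_def by auto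
    consider "j < N" "l < N" | "j < N" "N \<le> l" | "N \<le> j" "l < N" | "N \<le> j" "N \<le> l" by linarith
    then show ?thesis
    proof cases
      case 1 then show ?thesis using v1 zinj that by auto
    next
      case 2
      have "l - N < N" using 2 that by linarith
      then show ?thesis using 2 v1[of j] v2[of l] pos[of j] pos[of "l - N"] that by auto
    next
      case 3
      have "j - N < N" using 3 that by linarith
      then show ?thesis using 3 v1[of l] v2[of j] pos[of l] pos[of "j - N"] that by auto
    next
      case 4 then show ?thesis using v2[of j] v2[of l] zinj[of "j - N" "l - N"] that by auto
    qed
  qed
  show "velocity N (j+1) = - velocity N (j+N+1) \<and> velocity N (j+N+1) > 0" if "j < N" for j
    using v1[OF that] v2[of "j+N"] zZ[OF that] unfolding Z_def by auto
qed

definition phi :: "nat \<Rightarrow> real \<Rightarrow> real vec" where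
  "phi K x = vec K (\<lambda>i. h i x)"

lemma A_phi:
  assumes "h (2*N) x = 0"
  shows "Amat N *\<^sub>v phi (2*N) x = x \<cdot>\<^sub>v phi (2*N) x"
proof (rule eq_vecI)
  show "dim_vec (Amat N *\<^sub>v phi (2*N) x) = dim_vec (x \<cdot>\<^sub>v phi (2*N) x)"
    by (simp add: Amat_def phi_def)
  fix i assume "i < dim_vec (x \<cdot>\<^sub>v phi (2*N) x)"
  then have i: "i < 2*N" by (simp add: phi_def)
  have "(Amat N *\<^sub>v phi (2*N) x) $ i = (\<Sum>l = 0..<2*N. (if l = i + 1 then sqrt (real l)
        else if i = l + 1 then sqrt (real i) else 0) * h l x)"
    using i by (simp add: Amat_def phi_def scalar_prod_def)
  also have "\<dots> = (\<Sum>l = 0..<2*N. (if l = Suc i then sqrt (real (Suc i)) * h (Suc i) x else 0)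
        + (if 0 < i then (if l = i - 1 then sqrt (real i) * h (i - 1) x else 0) else 0))"
    by (rule sum.cong) auto
  also have "\<dots> = (if Suc i < 2*N then sqrt (real (Suc i)) * h (Suc i) x else 0)
        + (if 0 < i then sqrt (real i) * h (i - 1) x else 0)"
    using i by (simp add: sum.distrib sum.delta)
  also have "\<dots> = x * h i x"
  proof (cases "Suc i < 2*N")
    case True then show ?thesis using h_three[of x i] by auto
  next
    case False
    then have "Suc i = 2*N" using i by simp
    then show ?thesis using h_three[of x i] assms by auto
  qed
  also have "\<dots> = (x \<cdot>\<^sub>v phi (2*N) x) $ i" using i by (simp add: phi_def)
  finally show "(Amat N *\<^sub>v phi (2*N) x) $ i = (x \<cdot>\<^sub>v phi (2*N) x) $ i" .
qed

lemma A_carrier: "Amat N \<in> carrier_mat (2*N) (2*N)" by (simp add: Amat_def)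

lemma A_sym: "transpose_mat (Amat N) = Amat N"
  by (rule eq_matI) (auto simp: Amat_def)

lemma phi_carrier: "phi K x \<in> carrier_vec K" by (simp add: phi_def)

lemma phi_orth:
  assumes "h (2*N) a = 0" "h (2*N) b = 0" "a \<noteq> b"
  shows "phi (2*N) a \<bullet> phi (2*N) b = 0"
proof -
  have "(transpose_mat (Amat N) *\<^sub>v phi (2*N) a) \<bullet> phi (2*N) b = phi (2*N) a \<bullet> (Amat N *\<^sub>v phi (2*N) b)"
    by (rule transpose_vec_mult_scalar[OF A_carrier phi_carrier phi_carrier])
  then have "a * (phi (2*N) a \<bullet> phi (2*N) b) = b * (phi (2*N) a \<bullet> phi (2*N) b)"
    unfolding A_sym A_phi[OF assms(1)] A_phi[OF assms(2)]
    using smult_scalar_prod_distrib[OF phi_carrier phi_carrier] scalar_prod_smult_distrib[OF phi_carrier phi_carrier]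
    by simp
  then show ?thesis using assms(3) by simp
qed

lemma phi_norm:
  assumes "K \<ge> 1"
  shows "phi K x \<bullet> phi K x \<ge> 1"
proof -
  have "phi K x \<bullet> phi K x = (\<Sum>i = 0..<K. (h i x)\<^sup>2)" by (simp add: phi_def scalar_prod_def power2_eq_square)
  also have "\<dots> \<ge> (h 0 x)\<^sup>2" using assms by (intro member_le_sum) auto
  finally show ?thesis by simp
qed

lemma phi_norm_neg: "phi K (-x) \<bullet> phi K (-x) = phi K x \<bullet> phi K x"
proof -
  have "(h i (-x)) * (h i (-x)) = h i x * h i x" for i
    by (simp add: h_parity)
  then show ?thesis by (simp add: phi_def scalar_prod_def)
qed


theorem lemma4p1:
  fixes N n :: nat
  assumes "N \<ge> 1" and "n \<ge> 2"
  shows "(\<forall>y \<in> mat_kernel (B2mat N n). y \<bullet> (Amat N *\<^sub>v y) \<le> 0)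
       \<and> (n \<ge> 3 \<longrightarrow> (\<forall>y \<in> mat_kernel (B2mat N n). y \<noteq> 0\<^sub>v (2*N) \<longrightarrow> y \<bullet> (Amat N *\<^sub>v y) < 0))"
proof -
  define K where "K = 2*N"
  define w where "w j = velocity N (j+1)" for j
  define V where "V = Vmat N"
  define A where "A = Amat N"
  define a where "a = real n - 1"
  have a1: "a \<ge> 1" unfolding a_def using assms(2) by simp
  have K1: "K \<ge> 1" unfolding K_def using assms(1) by simp
  have W1: "h K (w j) = 0" if "j < K" for j using vel_props(1)[OF assms(1)] that unfolding K_def w_def by blast
  have W2: "w j \<noteq> w l" if "j < K" "l < K" "j \<noteq> l" for j l
    using vel_props(2)[OF assms(1)] that unfolding K_def w_def by blast
  have W3: "w j = - w (j+N)" "w (j+N) > 0" if "j < N" for j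
    using vel_props(3)[OF assms(1) that] unfolding w_def by (auto simp: add.assoc)
  have Vc: "V \<in> carrier_mat K K" unfolding V_def Vmat_def K_def by simp
  have Ac: "A \<in> carrier_mat K K" unfolding A_def K_def by (rule A_carrier)
  have phic: "phi K x \<in> carrier_vec K" for x by (rule phi_carrier)
  have Vij: "V $$ (i, j) = h i (w j)" if "i < K" "j < K" for i j
    using that unfolding V_def Vmat_def K_def w_def by simp
  have colV: "col V j = phi K (w j)" if "j < K" for j
    by (rule eq_vecI) (use that Vc Vij in \<open>auto simp: phi_def\<close>)
  define c where "c j = phi K (w j) \<bullet> phi K (w j)" for j
  have cpos: "c j > 0" for j using phi_norm[OF K1, of "w j"] unfolding c_def by simp
  have orth: "phi K (w j) \<bullet> phi K (w l) = 0" if "j < K" "l < K" "j \<noteq> l" for j l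
    using phi_orth[of N "w j" "w l"] W1 W2 that unfolding K_def by auto
  have csym: "c (j+N) = c j" if "j < N" for j
    unfolding c_def using W3(1)[OF that] phi_norm_neg by metis
  define P where "P = mat K K (\<lambda>(i,l). h l (w i) / c i)"
  have Pc: "P \<in> carrier_mat K K" unfolding P_def by simp
  have rowP: "row P i = (1 / c i) \<cdot>\<^sub>v phi K (w i)" if "i < K" for i
    by (rule eq_vecI) (use that in \<open>auto simp: P_def phi_def\<close>)
  have PV: "P * V = 1\<^sub>m K"
  proof (rule eq_matI)
    fix i j assume ij: "i < dim_row (1\<^sub>m K :: real mat)" "j < dim_col (1\<^sub>m K :: real mat)"
    then have i: "i < K" and j: "j < K" by auto
    have "(P * V) $$ (i, j) = row P i \<bullet> col V j" using i j Pc Vc by simp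
    also have "\<dots> = (1 / c i) * (phi K (w i) \<bullet> phi K (w j))"
      unfolding rowP[OF i] colV[OF j] by (rule smult_scalar_prod_distrib[OF phic phic])
    also have "\<dots> = (1\<^sub>m K :: real mat) $$ (i, j)"
      using i j orth[OF i j] cpos[of i] unfolding c_def by auto
    finally show "(P * V) $$ (i, j) = (1\<^sub>m K :: real mat) $$ (i, j)" .
  qed (use Pc Vc in auto)
  have VP: "V * P = 1\<^sub>m K" by (rule mat_mult_left_right_inverse[OF Pc Vc PV])
  have VtPhi: "transpose_mat V *\<^sub>v phi K (w j) = c j \<cdot>\<^sub>v unit_vec K j" if j: "j < K" for j
  proof (rule eq_vecI)
    fix l assume "l < dim_vec (c j \<cdot>\<^sub>v unit_vec K j)"
    then have l: "l < K" by simp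
    have "(transpose_mat V *\<^sub>v phi K (w j)) $ l = col V l \<bullet> phi K (w j)" using l Vc by simp
    also have "\<dots> = (if l = j then c j else 0)" using colV[OF l] orth[OF l j] unfolding c_def by auto
    also have "\<dots> = (c j \<cdot>\<^sub>v unit_vec K j) $ l" using l j by simp
    finally show "(transpose_mat V *\<^sub>v phi K (w j)) $ l = (c j \<cdot>\<^sub>v unit_vec K j) $ l" .
  qed (use Vc in simp)
  define D where "D = mat K K (\<lambda>(i,j). if i = j then w i else (0::real))"
  have Dc: "D \<in> carrier_mat K K" unfolding D_def by simp
  have colD: "col D j = w j \<cdot>\<^sub>v unit_vec K j" if "j < K" for j
    by (rule eq_vecI) (use that in \<open>auto simp: D_def\<close>)
  have rowD: "row D j = w j \<cdot>\<^sub>v unit_vec K j" if "j < K" for j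
    by (rule eq_vecI) (use that in \<open>auto simp: D_def\<close>)
  have AV: "A * V = V * D"
  proof (rule eq_matI)
    fix i j assume "i < dim_row (V * D)" "j < dim_col (V * D)"
    then have i: "i < K" and j: "j < K" using Vc Dc by auto
    have "(A * V) $$ (i, j) = (A *\<^sub>v col V j) $ i" using i j Ac Vc by simp
    also have "\<dots> = (w j \<cdot>\<^sub>v phi K (w j)) $ i"
      unfolding colV[OF j] A_def K_def using A_phi[of N "w j"] W1[OF j] unfolding K_def by simp
    also have "\<dots> = w j * h i (w j)" using i by (simp add: phi_def)
    also have "\<dots> = row V i \<bullet> col D j"
      unfolding colD[OF j] using scalar_prod_smult_distrib[of "row V i" K "unit_vec K j" "w j"] Vc i j Vij
      by (simp add: scalar_prod_right_unit)
    also have "\<dots> = (V * D) $$ (i, j)" using i j Vc Dc by simp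
    finally show "(A * V) $$ (i, j) = (V * D) $$ (i, j)" .
  qed (use Ac Vc Dc in auto)
  define E where "E = mat N (2*N) (\<lambda>(i,j). if j = i then 1 else if j = i + N then real n - 1 else (0::real))"
  have Ec: "E \<in> carrier_mat N K" unfolding E_def K_def by simp
  have B2E: "B2mat N n = E * transpose_mat V" unfolding B2mat_def E_def V_def ..
  have rowE: "row E i = unit_vec K i + a \<cdot>\<^sub>v unit_vec K (i+N)" if "i < N" for i
    by (rule eq_vecI) (use that assms(1) in \<open>auto simp: E_def K_def a_def\<close>)
  have main: "\<exists>z\<in>carrier_vec K. y = V *\<^sub>v z
      \<and> y \<bullet> (A *\<^sub>v y) = (\<Sum>j = 0..<N. c j * w (j+N) * (z $ (j+N))\<^sup>2 * (1 - a\<^sup>2))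
      \<and> (\<forall>j<N. z $ j = - a * z $ (j+N))"
    if y: "y \<in> mat_kernel (B2mat N n)" for y
  proof -
    have y1: "y \<in> carrier_vec (dim_col (B2mat N n))" and y2: "B2mat N n *\<^sub>v y = 0\<^sub>v (dim_row (B2mat N n))"
      using y unfolding mat_kernel_def by blast+
    have dB: "dim_col (B2mat N n) = K" "dim_row (B2mat N n) = N" unfolding B2E using Vc Ec by auto
    have yc: "y \<in> carrier_vec K" and By: "B2mat N n *\<^sub>v y = 0\<^sub>v N"
      using y1 y2 unfolding dB by auto
    define z where "z = P *\<^sub>v y"
    have zc: "z \<in> carrier_vec K" unfolding z_def by (rule mult_mat_vec_carrier[OF Pc yc])
    have "V *\<^sub>v (P *\<^sub>v y) = (V * P) *\<^sub>v y" using Vc Pc yc by simp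
    then have yz: "y = V *\<^sub>v z" unfolding z_def VP using yc by simp
    define u where "u = transpose_mat V *\<^sub>v y"
    have uj: "u $ j = c j * z $ j" if j: "j < K" for j
    proof -
      have "u $ j = col V j \<bullet> y" unfolding u_def using j Vc by simp
      also have "\<dots> = phi K (w j) \<bullet> (V *\<^sub>v z)" unfolding colV[OF j] yz ..
      also have "\<dots> = (transpose_mat V *\<^sub>v phi K (w j)) \<bullet> z"
        by (rule transpose_vec_mult_scalar[OF Vc zc phic, symmetric])
      also have "\<dots> = c j * z $ j" unfolding VtPhi[OF j]
        using smult_scalar_prod_distrib[of "unit_vec K j" K z "c j"] zc j
        by (simp add: scalar_prod_left_unit)
      finally show ?thesis .
    qed
    have ker: "u $ i + a * u $ (i+N) = 0" if i: "i < N" for i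
    proof -
      have "B2mat N n *\<^sub>v y = E *\<^sub>v u" unfolding B2E u_def using Ec Vc yc by simp
      then have "E *\<^sub>v u = 0\<^sub>v N" using By by simp
      then have "(E *\<^sub>v u) $ i = 0" using i by simp
      moreover have "(E *\<^sub>v u) $ i = row E i \<bullet> u" using i Ec by simp
      moreover have "row E i \<bullet> u = u $ i + a * u $ (i+N)"
      proof -
        have uc: "u \<in> carrier_vec K" unfolding u_def using Vc yc by simp
        have iK: "i < K" "i + N < K" using i unfolding K_def by auto
        show ?thesis unfolding rowE[OF i]
          using add_scalar_prod_distrib[of "unit_vec K i" K "a \<cdot>\<^sub>v unit_vec K (i+N)" u]
            smult_scalar_prod_distrib[of "unit_vec K (i+N)" K u a] uc iK
          by (simp add: scalar_prod_left_unit)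
      qed
      ultimately show ?thesis by simp
    qed
    have zrel: "z $ j = - a * z $ (j+N)" if j: "j < N" for j
    proof -
      have jK: "j < K" "j + N < K" using j unfolding K_def by auto
      have "c j * z $ j + a * (c j * z $ (j+N)) = 0"
        using ker[OF j] uj[OF jK(1)] uj[OF jK(2)] csym[OF j] by simp
      then have "c j * (z $ j + a * z $ (j+N)) = 0" by (simp add: algebra_simps)
      then show ?thesis using cpos[of j] by simp
    qed
    have Dz: "(D *\<^sub>v z) $ j = w j * z $ j" if j: "j < K" for j
    proof -
      have "(D *\<^sub>v z) $ j = row D j \<bullet> z" using j Dc by simp
      also have "\<dots> = w j * z $ j" unfolding rowD[OF j]
        using smult_scalar_prod_distrib[of "unit_vec K j" K z "w j"] zc j
        by (simp add: scalar_prod_left_unit)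
      finally show ?thesis .
    qed
    have "y \<bullet> (A *\<^sub>v y) = (V *\<^sub>v z) \<bullet> ((A * V) *\<^sub>v z)" unfolding yz using Ac Vc zc by simp
    also have "\<dots> = (V *\<^sub>v z) \<bullet> (V *\<^sub>v (D *\<^sub>v z))" unfolding AV using Vc Dc zc by simp
    also have "\<dots> = (transpose_mat V *\<^sub>v (V *\<^sub>v z)) \<bullet> (D *\<^sub>v z)"
      using Vc Dc zc by (intro transpose_vec_mult_scalar[symmetric]) auto
    also have "\<dots> = u \<bullet> (D *\<^sub>v z)" unfolding u_def yz ..
    also have "\<dots> = (\<Sum>j = 0..<K. c j * w j * (z $ j)\<^sup>2)"
      unfolding scalar_prod_def
    proof (rule sum.cong)
      show "{0..<dim_vec (D *\<^sub>v z)} = {0..<K}" using Dc by simp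
    next
      fix j assume "j \<in> {0..<K}"
      then have j: "j < K" by simp
      show "u $ j * (D *\<^sub>v z) $ j = c j * w j * (z $ j)\<^sup>2"
        unfolding uj[OF j] Dz[OF j] by (simp add: power2_eq_square)
    qed
    also have "\<dots> = (\<Sum>j = 0..<N. c j * w j * (z $ j)\<^sup>2) + (\<Sum>j = N..<K. c j * w j * (z $ j)\<^sup>2)"
      unfolding K_def by (rule sum.atLeastLessThan_concat[symmetric]) auto
    also have "(\<Sum>j = N..<K. c j * w j * (z $ j)\<^sup>2) = (\<Sum>j = 0..<N. c (j+N) * w (j+N) * (z $ (j+N))\<^sup>2)"
      using sum.shift_bounds_nat_ivl[of "\<lambda>j. c j * w j * (z $ j)\<^sup>2" 0 N N] unfolding K_def by (simp add: mult_2)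
    also have "(\<Sum>j = 0..<N. c j * w j * (z $ j)\<^sup>2) + (\<Sum>j = 0..<N. c (j+N) * w (j+N) * (z $ (j+N))\<^sup>2)
        = (\<Sum>j = 0..<N. c j * w (j+N) * (z $ (j+N))\<^sup>2 * (1 - a\<^sup>2))"
      unfolding sum.distrib[symmetric]
    proof (rule sum.cong)
      fix j assume "j \<in> {0..<N}"
      then have j: "j < N" by simp
      show "c j * w j * (z $ j)\<^sup>2 + c (j+N) * w (j+N) * (z $ (j+N))\<^sup>2 = c j * w (j+N) * (z $ (j+N))\<^sup>2 * (1 - a\<^sup>2)"
        unfolding W3(1)[OF j] zrel[OF j] csym[OF j] by (simp add: algebra_simps power2_eq_square)
    qed simp
    finally show ?thesis using zc yz zrel by blast
  qed
  have part1: "y \<bullet> (A *\<^sub>v y) \<le> 0" if y: "y \<in> mat_kernel (B2mat N n)" for y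
  proof -
    obtain z where z: "y \<bullet> (A *\<^sub>v y) = (\<Sum>j = 0..<N. c j * w (j+N) * (z $ (j+N))\<^sup>2 * (1 - a\<^sup>2))"
      using main[OF y] by blast
    have "a\<^sup>2 \<ge> 1" using a1 by (simp add: one_le_power)
    then have "c j * w (j+N) * (z $ (j+N))\<^sup>2 * (1 - a\<^sup>2) \<le> 0" if "j < N" for j
      using cpos[of j] W3(2)[OF that] by (intro mult_nonneg_nonpos) auto
    then show ?thesis unfolding z by (intro sum_nonpos) auto
  qed
  have part2: "y \<bullet> (A *\<^sub>v y) < 0" if y: "y \<in> mat_kernel (B2mat N n)" and y0: "y \<noteq> 0\<^sub>v (2*N)" and n3: "n \<ge> 3" for y
  proof -
    obtain z where zc: "z \<in> carrier_vec K" and yz: "y = V *\<^sub>v z"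
      and z: "y \<bullet> (A *\<^sub>v y) = (\<Sum>j = 0..<N. c j * w (j+N) * (z $ (j+N))\<^sup>2 * (1 - a\<^sup>2))"
      and zrel: "\<forall>j<N. z $ j = - a * z $ (j+N)"
      using main[OF y] by blast
    have a2: "a \<ge> 2" unfolding a_def using n3 by simp
    then have a2': "a\<^sup>2 > 1" by (simp add: power2_eq_square) (smt (verit) a2 mult_le_cancel_left1)
    have "z \<noteq> 0\<^sub>v K"
    proof
      assume "z = 0\<^sub>v K"
      then have "y = 0\<^sub>v K" unfolding yz using Vc by (intro eq_vecI) auto
      then show False using y0 unfolding K_def by simp
    qed
    have "\<exists>l<K. z $ l \<noteq> 0"
    proof (rule ccontr)
      assume "\<not> (\<exists>l<K. z $ l \<noteq> 0)"
      then have "z = 0\<^sub>v K" using zc by (intro eq_vecI) auto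
      then show False using \<open>z \<noteq> 0\<^sub>v K\<close> by simp
    qed
    then obtain l where l: "l < K" "z $ l \<noteq> 0" by blast
    obtain j where j: "j < N" "z $ (j+N) \<noteq> 0"
    proof (cases "l < N")
      case True
      have "z $ (l+N) \<noteq> 0"
      proof
        assume "z $ (l+N) = 0"
        then have "z $ l = 0" using zrel True by simp
        then show False using l by simp
      qed
      then show ?thesis using that[of l] True by simp
    next
      case False
      then show ?thesis using that[of "l - N"] l unfolding K_def by auto
    qed
    have le: "c i * w (i+N) * (z $ (i+N))\<^sup>2 * (1 - a\<^sup>2) \<le> 0" if "i < N" for i
      using cpos[of i] W3(2)[OF that] a2' by (intro mult_nonneg_nonpos) auto
    have lt: "c j * w (j+N) * (z $ (j+N))\<^sup>2 * (1 - a\<^sup>2) < 0"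
      using cpos[of j] W3(2)[OF j(1)] a2' j(2) by (intro mult_pos_neg) auto
    have "(\<Sum>i = 0..<N. c i * w (i+N) * (z $ (i+N))\<^sup>2 * (1 - a\<^sup>2))
        = c j * w (j+N) * (z $ (j+N))\<^sup>2 * (1 - a\<^sup>2) + (\<Sum>i \<in> {0..<N} - {j}. c i * w (i+N) * (z $ (i+N))\<^sup>2 * (1 - a\<^sup>2))"
      using j(1) by (subst sum.remove[of _ j]) auto
    also have "\<dots> < 0" using lt le by (intro add_neg_nonpos sum_nonpos) auto
    finally show ?thesis unfolding z .
  qed
  show ?thesis using part1 part2 unfolding A_def by blast
qed

end
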